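(* Let $X$ be a nodal toric Fano threefold and $\widetilde{X}\to X$ a small crepant toric resolution. Then there is an exact sequence $$0\longrightarrow\operatorname{Pic}(X)\longrightarrow\operatorname{Pic}(\widetilde{X})\xrightarrow{\ \phi\ }\bigoplus_{ABCD}\mathbb{Z},$$ where the sum runs over all quadrangular faces $\rho_A\rho_B\rho_C\rho_D$ (vertices in cyclic order) of the fan polytope of $X$, $\phi=\oplus_{ABCD}\phi_{ABCD}$, and $\phi_{ABCD}\big(\sum_\rho a_\rho D_\rho\big)=a_{\rho_A}-a_{\rho_B}+a_{\rho_C}-a_{\rho_D}$.
   Context: The fan polytope is the convex hull of the primitive ray generators; quadrangular faces correspond to the nodes of $X$. $D_\rho$ is the torus-invariant prime divisor of the ray $\rho$; since the resolution is small, torus-invariant Weil divisors on $X$ and $\widetilde{X}$ are identified, and $\operatorname{Pic}(X)\to\operatorname{Pic}(\widetilde{X})$ is pullback. *)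

theory Defs
  imports "HOL-Analysis.Analysis" "HOL-Algebra.Algebra"
begin

text \<open>Lattice N = int^3; its real span real^3.  Ray generators are lattice points.\<close>

definition rv :: "int^3 \<Rightarrow> real^3" where
  "rv v = (\<chi> i. real_of_int (v $ i))"

definition ipair :: "int^3 \<Rightarrow> int^3 \<Rightarrow> int" where
  "ipair m v = (\<Sum>i\<in>UNIV. m $ i * v $ i)"

definition primitive :: "int^3 \<Rightarrow> bool" where
  "primitive v \<longleftrightarrow> (\<forall>k::int. (\<forall>i. k dvd v $ i) \<longrightarrow> is_unit k)"

definition unimodular3 :: "int^3 \<Rightarrow> int^3 \<Rightarrow> int^3 \<Rightarrow> bool" where
  "unimodular3 a b c \<longleftrightarrow> det (vector [a, b, c] :: int^3^3) \<in> {1, -1}"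

definition fan_poly :: "(int^3) set \<Rightarrow> (real^3) set" where
  "fan_poly V = convex hull (rv ` V)"

text \<open>Ray generators lying on a face (= vertices of the face, since all of V are vertices).\<close>
definition verts :: "(int^3) set \<Rightarrow> (real^3) set \<Rightarrow> (int^3) set" where
  "verts V F = {v \<in> V. rv v \<in> F}"

definition smooth_tri :: "(int^3) set \<Rightarrow> (real^3) set \<Rightarrow> bool" where
  "smooth_tri V F \<longleftrightarrow> (\<exists>a\<in>V. \<exists>b\<in>V. \<exists>c\<in>V.
      F = convex hull (rv ` {a, b, c}) \<and> unimodular3 a b c)"

text \<open>Cone over a quadrangle which is an ordinary double point:
  GL(3,Z)-equivalent to the cone spanned by e1, e3, e2, e1+e2-e3.\<close>
definition node_quad :: "(int^3) set \<Rightarrow> (real^3) set \<Rightarrow> bool" where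
  "node_quad V F \<longleftrightarrow> (\<exists>a\<in>V. \<exists>b\<in>V. \<exists>c\<in>V. \<exists>d\<in>V.
      F = convex hull (rv ` {a, b, c, d}) \<and> a + c = b + d \<and> unimodular3 a b c)"

text \<open>A nodal toric Fano threefold, given by the set V of primitive ray generators of its fan;
  the fan is the face fan of the fan polytope, all ray generators are vertices of it,
  and every maximal cone is smooth or an ordinary double point.\<close>
definition nodal_toric_fano3 :: "(int^3) set \<Rightarrow> bool" where
  "nodal_toric_fano3 V \<longleftrightarrow> finite V \<and> 0 \<in> interior (fan_poly V) \<and>
     (\<forall>v\<in>V. primitive v \<and> rv v extreme_point_of fan_poly V) \<and>
     (\<forall>F. F facet_of fan_poly V \<longrightarrow> smooth_tri V F \<or> node_quad V F)"

text \<open>Maximal cones of the fan of X, each given by its set of ray generators.\<close>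
definition cones_X :: "(int^3) set \<Rightarrow> (int^3) set set" where
  "cones_X V = {verts V F | F. F facet_of fan_poly V}"

text \<open>A small (no new rays, hence crepant) toric resolution, given by its maximal cones:
  a triangulation of the boundary of the fan polytope using only the vertices, refining
  the facets.\<close>
definition small_res :: "(int^3) set \<Rightarrow> (int^3) set set \<Rightarrow> bool" where
  "small_res V S \<longleftrightarrow>
     (\<forall>\<sigma>\<in>S. card \<sigma> = 3 \<and> (\<exists>F. F facet_of fan_poly V \<and> \<sigma> \<subseteq> verts V F)) \<and>
     (\<forall>F. F facet_of fan_poly V \<longrightarrow>
         F = \<Union>{convex hull (rv ` \<sigma>) | \<sigma>. \<sigma> \<in> S \<and> \<sigma> \<subseteq> verts V F}) \<and>
     (\<forall>\<sigma>\<in>S. \<forall>\<tau>\<in>S. \<sigma> \<noteq> \<tau> \<longrightarrow>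
         convex hull (rv ` \<sigma>) \<inter> convex hull (rv ` \<tau>) = convex hull (rv ` (\<sigma> \<inter> \<tau>)))"

text \<open>Torus-invariant Weil divisors sum a_rho D_rho are functions a with support in V.
  Cartier divisors on a fan with maximal cones C: locally given by a character.\<close>
definition cdiv :: "(int^3) set \<Rightarrow> (int^3) set set \<Rightarrow> (int^3 \<Rightarrow> int) set" where
  "cdiv V C = {a. (\<forall>x. x \<notin> V \<longrightarrow> a x = 0) \<and>
                  (\<forall>\<sigma>\<in>C. \<exists>m. \<forall>v\<in>\<sigma>. a v = ipair m v)}"

definition princ :: "(int^3) set \<Rightarrow> (int^3 \<Rightarrow> int) set" where
  "princ V = {a. (\<forall>x. x \<notin> V \<longrightarrow> a x = 0) \<and> (\<exists>m. \<forall>v\<in>V. a v = ipair m v)}"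

definition cdiv_grp :: "(int^3) set \<Rightarrow> (int^3) set set \<Rightarrow> (int^3 \<Rightarrow> int) monoid" where
  "cdiv_grp V C = \<lparr>carrier = cdiv V C, mult = (\<lambda>a b x. a x + b x), one = (\<lambda>_. 0)\<rparr>"

definition pic :: "(int^3) set \<Rightarrow> (int^3) set set \<Rightarrow> (int^3 \<Rightarrow> int) set monoid" where
  "pic V C = cdiv_grp V C Mod princ V"

definition quads :: "(int^3) set \<Rightarrow> (real^3) set set" where
  "quads V = {F. F facet_of fan_poly V \<and> card (verts V F) = 4}"

text \<open>lab F = (A,B,C,D): the vertices of the quadrangle F in cyclic order.\<close>
definition cyclic_labelling :: "(int^3) set \<Rightarrow> ((real^3) set \<Rightarrow> (int^3) \<times> (int^3) \<times> (int^3) \<times> (int^3)) \<Rightarrow> bool" where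
  "cyclic_labelling V lab \<longleftrightarrow> (\<forall>F\<in>quads V. case lab F of (A, B, C, D) \<Rightarrow>
       verts V F = {A, B, C, D} \<and> A + C = B + D)"

definition zquads :: "(int^3) set \<Rightarrow> ((real^3) set \<Rightarrow> int) monoid" where
  "zquads V = \<lparr>carrier = {f. \<forall>F. F \<notin> quads V \<longrightarrow> f F = 0}, mult = (\<lambda>f g F. f F + g F), one = (\<lambda>_. 0)\<rparr>"

definition phi0 :: "(int^3) set \<Rightarrow> ((real^3) set \<Rightarrow> (int^3) \<times> (int^3) \<times> (int^3) \<times> (int^3))
                    \<Rightarrow> (int^3 \<Rightarrow> int) \<Rightarrow> (real^3) set \<Rightarrow> int" where
  "phi0 V lab a = (\<lambda>F. if F \<in> quads V then
       (case lab F of (A, B, C, D) \<Rightarrow> a A - a B + a C - a D) else 0)"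

definition phi :: "(int^3) set \<Rightarrow> ((real^3) set \<Rightarrow> (int^3) \<times> (int^3) \<times> (int^3) \<times> (int^3))
                    \<Rightarrow> (int^3 \<Rightarrow> int) set \<Rightarrow> (real^3) set \<Rightarrow> int" where
  "phi V lab cls = phi0 V lab (SOME a. a \<in> cls)"

end

theory Submission
  imports Defs
begin

lemma ipair_add: "ipair m (x + y) = ipair m x + ipair m y"
  by (simp add: ipair_def sum.distrib algebra_simps)

lemma ipair_zero: "ipair 0 v = 0"
  by (simp add: ipair_def)

lemma zero_princ: "(\<lambda>_. 0) \<in> princ V"
  unfolding princ_def using ipair_zero by auto

definition crs :: "int^3 \<Rightarrow> int^3 \<Rightarrow> int^3" where
  "crs u v = vector [u $ 2 * v $ 3 - u $ 3 * v $ 2, u $ 3 * v $ 1 - u $ 1 * v $ 3, u $ 1 * v $ 2 - u $ 2 * v $ 1]"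

lemma ipair_lin: "ipair (k *s m + l *s n + j *s p) v = k * ipair m v + l * ipair n v + j * ipair p v"
  by (simp add: ipair_def sum_3 algebra_simps)

lemma unimod_solve:
  assumes "unimodular3 a b c"
  shows "\<exists>m. ipair m a = x \<and> ipair m b = y \<and> ipair m c = z"
proof -
  define D where "D = det (vector [a, b, c] :: int^3^3)"
  have DD: "D * D = 1" using assms unfolding unimodular3_def D_def[symmetric] by auto
  have d1: "ipair (crs b c) a = D" "ipair (crs c a) a = 0" "ipair (crs a b) a = 0"
       "ipair (crs b c) b = 0" "ipair (crs c a) b = D" "ipair (crs a b) b = 0"
       "ipair (crs b c) c = 0" "ipair (crs c a) c = 0" "ipair (crs a b) c = D"
    unfolding D_def ipair_def crs_def det_3 sum_3 by (simp_all add: algebra_simps)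
  define m where "m = (D*x) *s crs b c + (D*y) *s crs c a + (D*z) *s crs a b"
  have "ipair m a = x" "ipair m b = y" "ipair m c = z"
    unfolding m_def ipair_lin d1 using DD by (simp_all add: algebra_simps)
  then show ?thesis by blast
qed

lemma unimod_distinct:
  assumes "unimodular3 a b c" "a + c = b + d"
  shows "a \<noteq> b" "b \<noteq> c" "a \<noteq> c" "d \<noteq> a" "d \<noteq> b" "d \<noteq> c"
proof -
  obtain m where m: "ipair m a = 1" "ipair m b = 2" "ipair m c = 4"
    using unimod_solve[OF assms(1)] by blast
  have "ipair m a + ipair m c = ipair m b + ipair m d"
    using assms(2) by (metis ipair_add)
  then have "ipair m d = 3" using m by simp
  then show "a \<noteq> b" "b \<noteq> c" "a \<noteq> c" "d \<noteq> a" "d \<noteq> b" "d \<noteq> c" using m by auto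
qed


lemma rv_inj: "rv u = rv v \<Longrightarrow> u = v"
  unfolding rv_def by (simp add: vec_eq_iff)

lemma verts_hull:
  assumes "nodal_toric_fano3 V" "F facet_of fan_poly V" "T \<subseteq> V" "F = convex hull (rv ` T)"
  shows "verts V F = T"
proof
  show "T \<subseteq> verts V F" using assms(3,4) by (auto simp: verts_def hull_inc)
  show "verts V F \<subseteq> T"
  proof
    fix v assume v: "v \<in> verts V F"
    then have vV: "v \<in> V" and vF: "rv v \<in> F" by (auto simp: verts_def)
    have ext: "rv v extreme_point_of fan_poly V" using assms(1) vV by (auto simp: nodal_toric_fano3_def)
    have sub: "F \<subseteq> fan_poly V" using assms(2) facet_of_imp_face_of face_of_imp_subset by blast
    have "rv v extreme_point_of F" using ext sub vF unfolding extreme_point_of_def by blast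
    then have "rv v \<in> rv ` T" using assms(4) extreme_point_of_convex_hull by metis
    then show "v \<in> T" using rv_inj by blast
  qed
qed

lemma phi0_add: "phi0 V lab (\<lambda>x. u x + w x) = (\<lambda>F. phi0 V lab u F + phi0 V lab w F)"
  by (rule ext) (simp add: phi0_def split: prod.split)

lemma phi0_princ:
  assumes "cyclic_labelling V lab" "h \<in> princ V"
  shows "phi0 V lab h = (\<lambda>_. 0)"
proof (rule ext)
  fix F
  obtain m where m: "\<forall>v\<in>V. h v = ipair m v" using assms(2) by (auto simp: princ_def)
  show "phi0 V lab h F = 0"
  proof (cases "F \<in> quads V")
    case True
    obtain A B C D where l: "lab F = (A, B, C, D)" by (metis prod_cases4)
    have vs: "verts V F = {A, B, C, D}" "A + C = B + D" using assms(1) True l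
      unfolding cyclic_labelling_def by fastforce+
    have "{A, B, C, D} \<subseteq> V" using vs(1) unfolding verts_def by blast
    then have "h A - h B + h C - h D = (ipair m A + ipair m C) - (ipair m B + ipair m D)"
      using m by auto
    also have "\<dots> = 0" using vs(2) by (metis ipair_add diff_self)
    finally show ?thesis using True l by (simp add: phi0_def)
  qed (simp add: phi0_def)
qed

lemma some_const: fixes XX :: "'a set" and ff :: "'a \<Rightarrow> 'b"
  shows "XX \<noteq> {} \<Longrightarrow> \<forall>u\<in>XX. ff u = cc \<Longrightarrow> ff (SOME u. u \<in> XX) = cc"
  by (metis ex_in_conv someI_ex)

lemma rc: "H #>\<^bsub>cdiv_grp V C\<^esub> a = (\<lambda>h x. h x + a x) ` H"
  by (auto simp: r_coset_def cdiv_grp_def)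

lemma carrier_pic: "carrier (pic V C) = (\<lambda>a. (\<lambda>h x. h x + a x) ` princ V) ` cdiv V C"
  unfolding pic_def FactGroup_def RCOSETS_def rc by (auto simp: cdiv_grp_def)

lemma mult_pic: "mult (pic V C) P Q = (\<Union>u\<in>P. \<Union>w\<in>Q. {\<lambda>x. u x + w x})"
  by (simp add: pic_def FactGroup_def set_mult_def cdiv_grp_def)

lemma phi_coset:
  assumes "cyclic_labelling V lab"
  shows "phi V lab ((\<lambda>h x. h x + a x) ` princ V) = phi0 V lab a"
  unfolding phi_def
  apply (rule some_const[where ff="phi0 V lab"])
  using zero_princ apply blast
  using phi0_princ[OF assms] by (auto simp: phi0_add)

lemma phi_mult:
  assumes "cyclic_labelling V lab"
  shows "phi V lab (mult (pic V C) ((\<lambda>h x. h x + a x) ` princ V) ((\<lambda>h x. h x + b x) ` princ V))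
     = (\<lambda>F. phi0 V lab a F + phi0 V lab b F)"
  unfolding phi_def mult_pic
  apply (rule some_const[where ff="phi0 V lab"])
  using zero_princ apply blast
  using phi0_princ[OF assms] by (auto simp: phi0_add)


lemma cdiv_mono:
  assumes "small_res V S"
  shows "cdiv V (cones_X V) \<subseteq> cdiv V S"
proof
  fix f assume f: "f \<in> cdiv V (cones_X V)"
  have "\<exists>m. \<forall>v\<in>\<sigma>. f v = ipair m v" if sS: "\<sigma> \<in> S" for \<sigma>
  proof -
    have "\<forall>\<sigma>\<in>S. card \<sigma> = 3 \<and> (\<exists>F. F facet_of fan_poly V \<and> \<sigma> \<subseteq> verts V F)"
      using assms[unfolded small_res_def] by (rule conjunct1)
    then obtain F where F: "F facet_of fan_poly V" "\<sigma> \<subseteq> verts V F"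
      using sS by blast
    have vc: "verts V F \<in> cones_X V" using F(1) unfolding cones_X_def by blast
    have "\<forall>\<sigma>\<in>cones_X V. \<exists>m. \<forall>v\<in>\<sigma>. f v = ipair m v" using f by (simp add: cdiv_def)
    then obtain m where "\<forall>v\<in>verts V F. f v = ipair m v" using vc by blast
    then show ?thesis using F(2) by blast
  qed
  moreover have "\<forall>x. x \<notin> V \<longrightarrow> f x = 0" using f by (simp add: cdiv_def)
  ultimately show "f \<in> cdiv V S" unfolding cdiv_def mem_Collect_eq by (intro conjI ballI) auto
qed

lemma phi0_cdivX:
  assumes "cyclic_labelling V lab" "f \<in> cdiv V (cones_X V)"
  shows "phi0 V lab f = (\<lambda>_. 0)"
proof (rule ext)
  fix F
  show "phi0 V lab f F = 0"
  proof (cases "F \<in> quads V")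
    case True
    have "verts V F \<in> cones_X V" using True unfolding quads_def cones_X_def by blast
    then obtain m where m: "\<forall>v\<in>verts V F. f v = ipair m v" using assms(2) unfolding cdiv_def by blast
    obtain A B C D where l: "lab F = (A, B, C, D)" by (metis prod_cases4)
    have vs: "verts V F = {A, B, C, D}" "A + C = B + D" using assms(1) True l
      unfolding cyclic_labelling_def by fastforce+
    have "f A - f B + f C - f D = (ipair m A + ipair m C) - (ipair m B + ipair m D)"
      using m vs(1) by auto
    also have "\<dots> = 0" using vs(2) by (metis ipair_add diff_self)
    finally show ?thesis using True l by (simp add: phi0_def)
  qed (simp add: phi0_def)
qed

lemma card3_le: "card {x, y, z} \<le> 3"
  by (simp add: card_insert_if)

lemma card4_distinct:
  assumes "card {A, B, C, D} = 4"
  shows "A \<noteq> B \<and> A \<noteq> C \<and> A \<noteq> D \<and> B \<noteq> C \<and> B \<noteq> D \<and> C \<noteq> D"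
proof (intro conjI notI)
  assume "A = B" then have "{A, B, C, D} = {B, C, D}" by simp
  then show False using assms card3_le[of B C D] by simp
next
  assume "A = C" then have "{A, B, C, D} = {B, C, D}" by auto
  then show False using assms card3_le[of B C D] by simp
next
  assume "A = D" then have "{A, B, C, D} = {B, C, D}" by auto
  then show False using assms card3_le[of B C D] by simp
next
  assume "B = C" then have "{A, B, C, D} = {A, C, D}" by auto
  then show False using assms card3_le[of A C D] by simp
next
  assume "B = D" then have "{A, B, C, D} = {A, C, D}" by auto
  then show False using assms card3_le[of A C D] by simp
next
  assume "C = D" then have "{A, B, C, D} = {A, B, D}" by auto
  then show False using assms card3_le[of A B D] by simp
qed

lemma pairing:
  fixes f g :: "'a \<Rightarrow> int"
  assumes "A \<in> {a,b,c,d}" "B \<in> {a,b,c,d}" "C \<in> {a,b,c,d}" "D \<in> {a,b,c,d}"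
    "A \<noteq> B \<and> A \<noteq> C \<and> A \<noteq> D \<and> B \<noteq> C \<and> B \<noteq> D \<and> C \<noteq> D"
    "g a = 0" "g b = 1" "g c = 0" "g d = -1" "g A + g C = g B + g D"
    "f A - f B + f C - f D = 0"
  shows "f a + f c = f b + f d"
  using assms(1-4) apply (elim insertE emptyE)
  using assms(5-) by auto

lemma cdivX_of_phi0:
  assumes "nodal_toric_fano3 V" "cyclic_labelling V lab" "f \<in> cdiv V S"
    and ph: "phi0 V lab f = (\<lambda>_. 0)"
  shows "f \<in> cdiv V (cones_X V)"
proof -
  have "\<exists>m. \<forall>v\<in>\<sigma>. f v = ipair m v" if sX: "\<sigma> \<in> cones_X V" for \<sigma>
  proof -
    obtain F where F: "F facet_of fan_poly V" "\<sigma> = verts V F"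
      using sX unfolding cones_X_def by blast
    have "smooth_tri V F \<or> node_quad V F" using assms(1) F(1) unfolding nodal_toric_fano3_def by blast
    then show ?thesis
    proof
      assume "smooth_tri V F"
      then obtain a b c where abc: "a \<in> V" "b \<in> V" "c \<in> V"
        "F = convex hull (rv ` {a, b, c})" "unimodular3 a b c"
        unfolding smooth_tri_def by blast
      have sg: "\<sigma> = {a, b, c}" using verts_hull[OF assms(1) F(1) _ abc(4)] abc(1-3) F(2) by blast
      obtain m where "ipair m a = f a \<and> ipair m b = f b \<and> ipair m c = f c"
        using unimod_solve[OF abc(5)] by blast
      then show ?thesis using sg by (intro exI[of _ m]) auto
    next
      assume "node_quad V F"
      then obtain a b c d where abc: "a \<in> V" "b \<in> V" "c \<in> V" "d \<in> V"
        "F = convex hull (rv ` {a, b, c, d})" "a + c = b + d" "unimodular3 a b c"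
        unfolding node_quad_def by blast
      have sig: "\<sigma> = {a, b, c, d}" using verts_hull[OF assms(1) F(1) _ abc(5)] abc(1-4) F(2) by blast
      note dis = unimod_distinct[OF abc(7) abc(6)]
      have c4: "card (verts V F) = 4" using sig F(2) dis by auto
      then have Fq: "F \<in> quads V" using F(1) unfolding quads_def by blast
      obtain A B C D where l: "lab F = (A, B, C, D)" by (metis prod_cases4)
      have "verts V F = {A, B, C, D} \<and> A + C = B + D"
        using bspec[OF assms(2)[unfolded cyclic_labelling_def] Fq] l by simp
      then have vs0: "verts V F = {A, B, C, D}" "A + C = B + D" by simp_all
      have vs: "{A, B, C, D} = {a, b, c, d}" "A + C = B + D" using vs0 sig F(2) by simp_all
      have dABCD: "A \<noteq> B \<and> A \<noteq> C \<and> A \<noteq> D \<and> B \<noteq> C \<and> B \<noteq> D \<and> C \<noteq> D"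
      proof -
        have "card {A, B, C, D} = 4" using c4 sig F(2) vs(1) by simp
        then show ?thesis by (rule card4_distinct)
      qed
      have "phi0 V lab f F = 0" using ph by simp
      then have fz: "f A - f B + f C - f D = 0" using Fq l by (simp add: phi0_def)
      obtain g where g: "ipair g a = 0" "ipair g b = 1" "ipair g c = 0"
        using unimod_solve[OF abc(7)] by blast
      have "ipair g a + ipair g c = ipair g b + ipair g d" using abc(6) by (metis ipair_add)
      then have gd: "ipair g d = -1" using g by simp
      have gs: "ipair g A + ipair g C = ipair g B + ipair g D" using vs(2) by (metis ipair_add)
      have key: "f a + f c = f b + f d"
      proof -
        have "A \<in> {a,b,c,d}" "B \<in> {a,b,c,d}" "C \<in> {a,b,c,d}" "D \<in> {a,b,c,d}" using vs(1) by auto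
        then show ?thesis using pairing[where g="ipair g", OF _ _ _ _ dABCD g gd gs fz] by blast
      qed
      obtain m where m: "ipair m a = f a" "ipair m b = f b" "ipair m c = f c"
        using unimod_solve[OF abc(7)] by blast
      have "ipair m a + ipair m c = ipair m b + ipair m d" using abc(6) by (metis ipair_add)
      then have "ipair m d = f d" using m key by simp
      then show ?thesis using m sig by (intro exI[of _ m]) auto
    qed
  qed
  moreover have "\<forall>x. x \<notin> V \<longrightarrow> f x = 0" using assms(3) by (simp add: cdiv_def)
  ultimately show ?thesis unfolding cdiv_def mem_Collect_eq by (intro conjI ballI) auto
qed


lemma rc_eq: "H #>\<^bsub>cdiv_grp V C1\<^esub> a = H #>\<^bsub>cdiv_grp V C2\<^esub> a"
  by (simp add: rc)

theorem lemma3p4: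
  fixes V :: "(int^3) set" and S :: "(int^3) set set"
    and lab :: "(real^3) set \<Rightarrow> (int^3) \<times> (int^3) \<times> (int^3) \<times> (int^3)"
  assumes "nodal_toric_fano3 V"
    and "small_res V S"
    and "cyclic_labelling V lab"
  shows "(\<lambda>cls. cls) \<in> hom (pic V (cones_X V)) (pic V S)
    \<and> inj_on (\<lambda>cls. cls) (carrier (pic V (cones_X V)))
    \<and> phi V lab \<in> hom (pic V S) (zquads V)
    \<and> kernel (pic V S) (zquads V) (phi V lab) = (\<lambda>cls. cls) ` carrier (pic V (cones_X V))"
proof (intro conjI)
  let ?cl = "\<lambda>a. (\<lambda>h x. h x + a x) ` princ V"
  have sub: "cdiv V (cones_X V) \<subseteq> cdiv V S" by (rule cdiv_mono[OF assms(2)])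
  have csub: "carrier (pic V (cones_X V)) \<subseteq> carrier (pic V S)"
    unfolding carrier_pic using sub by blast
  show "(\<lambda>cls. cls) \<in> hom (pic V (cones_X V)) (pic V S)"
    unfolding hom_def using csub by (auto simp: mult_pic)
  show "inj_on (\<lambda>cls. cls) (carrier (pic V (cones_X V)))" by simp
  have phiq: "phi V lab P \<in> carrier (zquads V)" for P
    by (simp add: zquads_def phi_def phi0_def)
  show "phi V lab \<in> hom (pic V S) (zquads V)"
  proof (rule homI)
    fix P assume "P \<in> carrier (pic V S)"
    show "phi V lab P \<in> carrier (zquads V)" by (rule phiq)
  next
    fix P Q assume P: "P \<in> carrier (pic V S)" and Q: "Q \<in> carrier (pic V S)"
    obtain a where a: "P = ?cl a" using P unfolding carrier_pic by blast
    obtain b where b: "Q = ?cl b" using Q unfolding carrier_pic by blast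
    show "phi V lab (P \<otimes>\<^bsub>pic V S\<^esub> Q) = phi V lab P \<otimes>\<^bsub>zquads V\<^esub> phi V lab Q"
      unfolding a b phi_mult[OF assms(3)] phi_coset[OF assms(3)]
      by (simp add: zquads_def)
  qed
  show "kernel (pic V S) (zquads V) (phi V lab) = (\<lambda>cls. cls) ` carrier (pic V (cones_X V))"
  proof
    show "kernel (pic V S) (zquads V) (phi V lab) \<subseteq> (\<lambda>cls. cls) ` carrier (pic V (cones_X V))"
    proof
      fix P assume "P \<in> kernel (pic V S) (zquads V) (phi V lab)"
      then have P: "P \<in> carrier (pic V S)" and z: "phi V lab P = (\<lambda>_. 0)"
        by (auto simp: kernel_def zquads_def)
      obtain a where a: "P = ?cl a" "a \<in> cdiv V S" using P unfolding carrier_pic by blast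
      have "phi0 V lab a = (\<lambda>_. 0)" using z unfolding a(1) phi_coset[OF assms(3)] .
      then have "a \<in> cdiv V (cones_X V)" using cdivX_of_phi0[OF assms(1,3) a(2)] by blast
      then show "P \<in> (\<lambda>cls. cls) ` carrier (pic V (cones_X V))"
        unfolding carrier_pic a(1) by blast
    qed
    show "(\<lambda>cls. cls) ` carrier (pic V (cones_X V)) \<subseteq> kernel (pic V S) (zquads V) (phi V lab)"
    proof
      fix P assume "P \<in> (\<lambda>cls. cls) ` carrier (pic V (cones_X V))"
      then obtain a where a: "P = ?cl a" "a \<in> cdiv V (cones_X V)" unfolding carrier_pic by blast
      have "phi V lab P = (\<lambda>_. 0)" unfolding a(1) phi_coset[OF assms(3)]
        by (rule phi0_cdivX[OF assms(3) a(2)])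
      moreover have "P \<in> carrier (pic V S)" using a sub unfolding carrier_pic by blast
      ultimately show "P \<in> kernel (pic V S) (zquads V) (phi V lab)"
        by (simp add: kernel_def zquads_def)
    qed
  qed
qed

end
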